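(* Let $\mathcal{H}=(V,E)$ be a hypergraph with no repeated hyperedge, $V=\{v_1,\dots,v_n\}$, of range $k_{\max}\geq 2$, and let $\mathcal{A}_{\mathcal{H}}$ be its layered e-adjacency tensor (defined in the context). Let $\Delta=\max_{1\le i\le n}\deg(v_i)$ and $\Delta^\star=\max_{1\le i\le k_{\max}-1}\deg(y_i)$. Then every eigenvalue $\lambda$ of $\mathcal{A}_{\mathcal{H}}$ satisfies $|\lambda|\le \max(\Delta,\Delta^\star)$.
   Context: A hypergraph $\mathcal{H}=(V,E)$ on $V=\{v_1,\dots,v_n\}$ is a family $E$ of nonempty subsets (hyperedges) of $V$; it has no repeated hyperedge if its hyperedges are pairwise distinct. The range is $k_{\max}=\max\{|e|:e\in E\}$, and $\deg(v_i)$ is the number of hyperedges containing $v_i$. Introduce new pairwise distinct vertices $y_1,\dots,y_{k_{\max}-1}\notin V$. The layered uniform hypergraph of $\mathcal{H}$ is the $k_{\max}$-uniform hypergraph on $V\cup\{y_1,\dots,y_{k_{\max}-1}\}$ with hyperedges $e\cup\{y_{|e|},\dots,y_{k_{\max}-1}\}$ for $e\in E$; $\deg(y_i)$ is the number of these hyperedges containing $y_i$. The layered e-adjacency tensor $\mathcal{A}_{\mathcal{H}}=(a_{i_1\dots i_{k_{\max}}})$ is the symmetric hypermatrix of order $k_{\max}$ and dimension $N=n+k_{\max}-1$ (index $i\le n$ for $v_i$, index $n+l$ for $y_l$) such that: for each $e=\{v_{i_1},\dots,v_{i_j}\}\in E$ with $i_1<\dots<i_j$, putting $i_l=n+l-1$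 for $l\in\{j+1,\dots,k_{\max}\}$, every entry whose index tuple is a permutation of $(i_1,\dots,i_{k_{\max}})$ equals $\frac{1}{(k_{\max}-1)!}$; all other entries are $0$. Eigenvalues (in the sense of Qi): for a hypermatrix $\mathcal{A}=(a_{i_1\dots i_m})$ of order $m$ and dimension $N$, $\lambda\in\mathbb{C}$ is an eigenvalue if there exists a nonzero $x\in\mathbb{C}^N$ with $\sum_{i_2,\dots,i_m=1}^{N} a_{i i_2\dots i_m}x_{i_2}\cdots x_{i_m}=\lambda x_i^{m-1}$ for all $i\in\{1,\dots,N\}$. *)

theory Defs
  imports "HOL-Library.Multiset" Complex_Main
begin

text \<open>A hypergraph on vertices v_1..v_n is represented with 0-based indices:
  vertex v_(i+1) is index i < n. Its hyperedges are given as a list (a family,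
  possibly with repetitions) of subsets of {..<n}. The added vertex y_l
  (1 \<le> l \<le> kmax-1) is index n + l - 1, so the tensor dimension is n + kmax - 1.\<close>

definition kmax :: "nat set list \<Rightarrow> nat" where
  "kmax es = Max (card ` set es)"

definition tdim :: "nat \<Rightarrow> nat set list \<Rightarrow> nat" where
  "tdim n es = n + kmax es - 1"

text \<open>Layered hyperedge: e \<union> {y_|e|, ..., y_(kmax-1)}.\<close>
definition layered_edge :: "nat \<Rightarrow> nat set list \<Rightarrow> nat set \<Rightarrow> nat set" where
  "layered_edge n es e = e \<union> {n + card e - 1 ..< n + kmax es - 1}"

definition layered_tensor :: "nat \<Rightarrow> nat set list \<Rightarrow> nat list \<Rightarrow> real" where
  "layered_tensor n es idx =
     (if \<exists>e\<in>set es. mset idx = mset_set (layered_edge n es e)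
      then 1 / fact (kmax es - 1) else 0)"

definition deg_v :: "nat set list \<Rightarrow> nat \<Rightarrow> nat" where
  "deg_v es i = length (filter (\<lambda>e. i \<in> e) es)"

definition deg_y :: "nat \<Rightarrow> nat set list \<Rightarrow> nat \<Rightarrow> nat" where
  "deg_y n es l = length (filter (\<lambda>e. n + l - 1 \<in> layered_edge n es e) es)"

definition qi_eigenvalue :: "nat \<Rightarrow> nat \<Rightarrow> (nat list \<Rightarrow> real) \<Rightarrow> complex \<Rightarrow> bool" where
  "qi_eigenvalue m N A lam \<longleftrightarrow>
     (\<exists>x :: nat \<Rightarrow> complex. (\<exists>i<N. x i \<noteq> 0) \<and>
        (\<forall>i<N. (\<Sum>js\<in>{js. length js = m - 1 \<and> set js \<subseteq> {..<N}}.
                   complex_of_real (A (i # js)) * prod_list (map x js))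
               = lam * x i ^ (m - 1)))"

end

theory Submission
  imports Defs "HOL-Combinatorics.Multiset_Permutations"
begin

lemma prod_bound:
  assumes "\<forall>j<N. cmod (x j) \<le> M" "set js \<subseteq> {..<N}"
  shows "cmod (prod_list (map x js)) \<le> M ^ length js"
  using assms(2)
proof (induction js)
  case Nil then show ?case by simp
next
  case (Cons a js)
  have a: "cmod (x a) \<le> M" using Cons.prems assms(1) by auto
  have "cmod (prod_list (map x (a # js))) = cmod (x a) * cmod (prod_list (map x js))"
    by (simp add: norm_mult)
  also have "\<dots> \<le> M * M ^ length js"
    using Cons a by (intro mult_mono) (auto intro: order_trans[OF norm_ge_zero])
  finally show ?case by simp
qed

lemma count_lists:
  assumes "finite S"
  shows "card {js. mset js = mset_set S} = fact (card S)"
proof -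
  have "{js. mset js = mset_set S} = permutations_of_set S"
  proof (intro set_eqI iffI)
    fix js assume "js \<in> {js. mset js = mset_set S}"
    then have h: "mset js = mset_set S" by simp
    have s: "set js = S" using h assms
      by (metis finite_set_mset_mset_set set_mset_mset)
    have "length js = card S" using h
      by (metis size_mset size_mset_set)
    then have "distinct js" using s by (intro card_distinct) simp
    then show "js \<in> permutations_of_set S" using s by (simp add: permutations_of_set_def)
  next
    fix js assume "js \<in> permutations_of_set S"
    then show "js \<in> {js. mset js = mset_set S}"
      by (auto simp: permutations_of_set_def mset_set_set)
  qed
  then show ?thesis using assms by simp
qed

lemma card_layered:
  assumes edges: "\<forall>e\<in>set es. e \<noteq> {} \<and> e \<subseteq> {..<n}" and e: "e \<in> set es"
  shows "card (layered_edge n es e) \<le> kmax es" "finite (layered_edge n es e)"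
proof -
  have fe: "finite e" using edges e by (meson finite_lessThan finite_subset)
  have ce: "card e \<ge> 1" using edges e fe by (simp add: Suc_le_eq card_gt_0_iff)
  have cm: "card e \<le> kmax es" unfolding kmax_def using e by (intro Max_ge) auto
  have "card (layered_edge n es e) \<le> card e + card {n + card e - 1 ..< n + kmax es - 1}"
    unfolding layered_edge_def by (rule card_Un_le)
  also have "\<dots> = kmax es" using ce cm by simp
  finally show "card (layered_edge n es e) \<le> kmax es" .
  show "finite (layered_edge n es e)" using fe unfolding layered_edge_def by simp
qed

lemma row_sum:
  assumes edges: "\<forall>e\<in>set es. e \<noteq> {} \<and> e \<subseteq> {..<n}"
    and range: "kmax es \<ge> 2"
  shows "(\<Sum>js\<in>{js. length js = kmax es - 1 \<and> set js \<subseteq> {..<N}}. layered_tensor n es (i # js))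
     \<le> real (length (filter (\<lambda>e. i \<in> layered_edge n es e) es))"
proof -
  define m where "m = kmax es"
  define J where "J = {js. length js = m - 1 \<and> set js \<subseteq> {..<N}}"
  define c :: real where "c = 1 / fact (m - 1)"
  define L where "L = layered_edge n es"
  have fJ: "finite J" unfolding J_def using finite_lists_length_eq[of "{..<N}" "m - 1"]
    by (simp add: conj_commute)
  have c0: "c \<ge> 0" unfolding c_def by simp
  have "(\<Sum>js\<in>J. layered_tensor n es (i # js))
      \<le> (\<Sum>js\<in>J. \<Sum>e\<in>set es. if mset (i#js) = mset_set (L e) then c else 0)"
  proof (rule sum_mono)
    fix js assume "js \<in> J"
    show "layered_tensor n es (i # js) \<le> (\<Sum>e\<in>set es. if mset (i#js) = mset_set (L e) then c else 0)"
    proof (cases "\<exists>e\<in>set es. mset (i # js) = mset_set (layered_edge n es e)")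
      case True
      then obtain e where e: "e \<in> set es" "mset (i # js) = mset_set (L e)" by (auto simp: L_def)
      have "layered_tensor n es (i # js) = (if mset (i#js) = mset_set (L e) then c else 0)"
        using True e by (simp add: layered_tensor_def c_def m_def)
      also have "\<dots> \<le> (\<Sum>e\<in>set es. if mset (i#js) = mset_set (L e) then c else 0)"
        using e c0 by (intro member_le_sum) auto
      finally show ?thesis .
    next
      case False
      then show ?thesis using c0 by (simp add: layered_tensor_def sum_nonneg)
    qed
  qed
  also have "\<dots> = (\<Sum>e\<in>set es. \<Sum>js\<in>J. if mset (i#js) = mset_set (L e) then c else 0)"
    by (rule sum.swap)
  also have "\<dots> \<le> (\<Sum>e\<in>set es. if i \<in> L e then 1 else 0)"
  proof (rule sum_mono)
    fix e assume e: "e \<in> set es"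
    have fL: "finite (L e)" and cL: "card (L e) \<le> m"
      using card_layered[OF edges e] by (auto simp: L_def m_def)
    have "(\<Sum>js\<in>J. if mset (i#js) = mset_set (L e) then c else 0)
        = c * card {js\<in>J. mset (i#js) = mset_set (L e)}"
      using sum.inter_filter[OF fJ, of "\<lambda>_. c" "\<lambda>js. mset (i#js) = mset_set (L e)", symmetric] by simp
    also have "\<dots> \<le> (if i \<in> L e then 1 else 0)"
    proof (cases "i \<in> L e")
      case True
      have sub: "{js\<in>J. mset (i#js) = mset_set (L e)} \<subseteq> {js. mset js = mset_set (L e - {i})}"
      proof
        fix js assume "js \<in> {js\<in>J. mset (i#js) = mset_set (L e)}"
        then have "mset (i#js) = mset_set (L e)" by simp
        then have "mset js = mset_set (L e) - {#i#}" by (metis add_mset_remove_trivial mset.simps(2))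
        then have "mset js = mset_set (L e) - mset_set {i}" by simp
        then show "js \<in> {js. mset js = mset_set (L e - {i})}"
          using mset_set_Diff[OF fL, of "{i}"] True by simp
      qed
      have "card {js\<in>J. mset (i#js) = mset_set (L e)} \<le> card {js. mset js = mset_set (L e - {i})}"
        using fJ by (intro card_mono[OF _ sub]) (metis card_ge_0_finite count_lists fL finite_Diff fact_gt_zero of_nat_0_less_iff of_nat_fact)
      also have "\<dots> = fact (card (L e) - 1)" using fL True by (simp add: count_lists)
      also have "\<dots> \<le> fact (m - 1)" using cL by (intro fact_mono) simp
      finally have "real (card {js\<in>J. mset (i#js) = mset_set (L e)}) \<le> fact (m - 1)"
        by (metis of_nat_fact of_nat_le_iff)
      then have "c * card {js\<in>J. mset (i#js) = mset_set (L e)} \<le> c * fact (m - 1)"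
        using c0 by (intro mult_left_mono) auto
      also have "\<dots> = 1" unfolding c_def by simp
      finally show ?thesis using True by simp
    next
      case False
      have emp: "{js\<in>J. mset (i#js) = mset_set (L e)} = {}"
      proof (rule ccontr)
        assume "{js\<in>J. mset (i#js) = mset_set (L e)} \<noteq> {}"
        then obtain js where "mset (i#js) = mset_set (L e)" by auto
        then have "i \<in># mset_set (L e)" by (metis list.set_intros(1) set_mset_mset)
        then show False using False fL by simp
      qed
      show ?thesis unfolding emp using False by simp
    qed
    finally show "(\<Sum>js\<in>J. if mset (i#js) = mset_set (L e) then c else 0) \<le> (if i \<in> L e then 1 else 0)" .
  qed
  also have "\<dots> = real (card {e\<in>set es. i \<in> L e})"
    by (simp add: sum.If_cases Int_def conj_commute)
  also have "\<dots> \<le> real (length (filter (\<lambda>e. i \<in> L e) es))"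
    by (metis card_length of_nat_le_iff set_filter)
  finally show ?thesis unfolding J_def m_def L_def .
qed

theorem mainTheorem2:
  fixes n :: nat and es :: "nat set list" and lam :: complex
  assumes edges: "\<forall>e\<in>set es. e \<noteq> {} \<and> e \<subseteq> {..<n}"
    and no_repeat: "distinct es"
    and range: "kmax es \<ge> 2"
    and eig: "qi_eigenvalue (kmax es) (tdim n es) (layered_tensor n es) lam"
  shows "cmod lam \<le> real (max (Max (deg_v es ` {..<n}))
                             (Max (deg_y n es ` {1..kmax es - 1})))"
proof -
  define m where "m = kmax es"
  define N where "N = tdim n es"
  define A where "A = layered_tensor n es"
  define J where "J = {js. length js = m - 1 \<and> set js \<subseteq> {..<N}}"
  obtain x :: "nat \<Rightarrow> complex" and i where xi: "i < N" "x i \<noteq> 0"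
    and eq: "\<forall>i<N. (\<Sum>js\<in>J. complex_of_real (A (i # js)) * prod_list (map x js)) = lam * x i ^ (m - 1)"
    using eig unfolding qi_eigenvalue_def J_def m_def N_def A_def by blast
  define M where "M = Max ((\<lambda>j. cmod (x j)) ` {..<N})"
  have ne: "{..<N} \<noteq> {}" using xi by auto
  have "M \<in> (\<lambda>j. cmod (x j)) ` {..<N}"
    unfolding M_def using ne by (intro Max_in) auto
  then obtain i0 where i0: "i0 < N" "cmod (x i0) = M" by auto
  have Mge: "\<forall>j<N. cmod (x j) \<le> M" unfolding M_def by (intro allI impI Max_ge) auto
  have "M \<ge> cmod (x i)" using Mge xi by auto
  then have Mpos: "M > 0" using xi by (meson less_le_trans zero_less_norm_iff)
  have fJ: "finite J" unfolding J_def using finite_lists_length_eq[of "{..<N}" "m - 1"]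
    by (simp add: conj_commute)
  have A0: "A js \<ge> 0" for js unfolding A_def layered_tensor_def by simp
  have "cmod lam * M ^ (m - 1) = cmod (lam * x i0 ^ (m - 1))"
    using i0 by (simp add: norm_mult norm_power)
  also have "\<dots> = cmod (\<Sum>js\<in>J. complex_of_real (A (i0 # js)) * prod_list (map x js))"
    using eq i0 by simp
  also have "\<dots> \<le> (\<Sum>js\<in>J. cmod (complex_of_real (A (i0 # js)) * prod_list (map x js)))"
    by (rule norm_sum)
  also have "\<dots> \<le> (\<Sum>js\<in>J. A (i0 # js) * M ^ (m - 1))"
  proof (rule sum_mono)
    fix js assume js: "js \<in> J"
    have "cmod (prod_list (map x js)) \<le> M ^ length js"
      using js by (intro prod_bound[OF Mge]) (auto simp: J_def)
    then have "cmod (prod_list (map x js)) \<le> M ^ (m - 1)" using js by (simp add: J_def)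
    then show "cmod (complex_of_real (A (i0 # js)) * prod_list (map x js)) \<le> A (i0 # js) * M ^ (m - 1)"
      using A0[of "i0 # js"] by (simp add: norm_mult mult_left_mono)
  qed
  also have "\<dots> = (\<Sum>js\<in>J. A (i0 # js)) * M ^ (m - 1)"
    by (simp add: sum_distrib_right)
  finally have "cmod lam * M ^ (m - 1) \<le> (\<Sum>js\<in>J. A (i0 # js)) * M ^ (m - 1)" .
  then have "cmod lam \<le> (\<Sum>js\<in>J. A (i0 # js))" using Mpos by simp
  also have "\<dots> \<le> real (length (filter (\<lambda>e. i0 \<in> layered_edge n es e) es))"
    unfolding J_def A_def m_def by (rule row_sum[OF edges range])
  also have "\<dots> \<le> real (max (Max (deg_v es ` {..<n})) (Max (deg_y n es ` {1..kmax es - 1})))"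
  proof (cases "i0 < n")
    case True
    have "filter (\<lambda>e. i0 \<in> layered_edge n es e) es = filter (\<lambda>e. i0 \<in> e) es"
    proof (rule filter_cong)
      fix e assume e: "e \<in> set es"
      have "card e \<ge> 1" using edges e
        by (metis One_nat_def Suc_leI card_gt_0_iff finite_lessThan finite_subset)
      then show "(i0 \<in> layered_edge n es e) = (i0 \<in> e)"
        using True unfolding layered_edge_def by auto
    qed simp
    then have "length (filter (\<lambda>e. i0 \<in> layered_edge n es e) es) = deg_v es i0"
      by (simp add: deg_v_def)
    also have "\<dots> \<le> Max (deg_v es ` {..<n})" using True by (intro Max_ge) auto
    finally show ?thesis by simp
  next
    case False
    define l where "l = i0 - n + 1"
    have l: "1 \<le> l" "l \<le> kmax es - 1" "n + l - 1 = i0"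
      using False i0(1) range unfolding l_def N_def tdim_def by auto
    have "length (filter (\<lambda>e. i0 \<in> layered_edge n es e) es) = deg_y n es l"
      using l by (simp add: deg_y_def)
    also have "\<dots> \<le> Max (deg_y n es ` {1..kmax es - 1})" using l by (intro Max_ge) auto
    finally show ?thesis by simp
  qed
  finally show ?thesis .
qed

end
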